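(* Let $X$ be a finite simple graph on vertex set $\{1,\dots,n\}$ and let $\pi\in S_X$. For each $\star\in\{\uparrow,\downarrow,\updownarrow\}$ (increasing, decreasing, mixed), the extended threshold SDS map $\mathbf{F}^\star_\pi$ has no periodic orbit of length $\ge 2$, i.e. all its periodic points are fixed points. For each $\star\in\{\uparrow,\downarrow,\updownarrow\}$, the extended threshold GCA map $\mathbf{F}^\star$ has no periodic orbit of length $\ge 3$, i.e. every periodic orbit has length $1$ or $2$.
   Context: Let $X$ be a finite simple graph with vertices $1,\dots,n$; $d(v)$ denotes the degree of $v$ and $n[v]$ the closed neighborhood of $v$ (including $v$). An extended vertex state is $s_v=(x_v,k_v)\in\{0,1\}\times\{1,2,\dots,d(v)+1\}$; the extended system state is $s=(s_1,\dots,s_n)\in\mathcal{S}=\prod_v(\{0,1\}\times\{1,\dots,d(v)+1\})$. Write $\sigma(x[v])=|\{u\in n[v]: x_u=1\}|$. The vertex function $f_v$ maps $s_v$ to $(x_v',k_v')$ where $x_v'=1$ if $\sigma(x[v])\ge k_v$ and $x_v'=0$ otherwise, and $k_v'$ is given by: increasing ($\uparrow$): $k_v'=k_v+1$ if $x_v=0$ and $\sigma(x[v])\ge k_v$, else $k_v'=k_v$; decreasing ($\downarrow$): $k_v'=k_v-1$ if $x_v=1$ and $\sigma(x[v])<k_v$, else $k_v'=k_v$; mixed ($\updownarrow$): $k_v'=k_v+1$ if $x_v=0$ and $\sigma(x[v])\ge k_v$, $k_v'=k_v-1$ if $x_v=1$ and $\sigma(x[v])<k_v$, else $k_v'=k_v$.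 The local map $F_v:\mathcal{S}\to\mathcal{S}$ replaces $s_v$ by $f_v$ applied to the current states of $n[v]$ and leaves other coordinates unchanged. For a permutation $\pi=(\pi_1,\dots,\pi_n)$ of the vertices, the sequential (SDS) map is $\mathbf{F}_\pi=F_{\pi_n}\circ\cdots\circ F_{\pi_1}$; the parallel (GCA) map $\mathbf{F}$ updates all vertices simultaneously, $\mathbf{F}(s)_v=f_v(s[v])$. A periodic orbit of length $m$ is a cycle of $m$ distinct states in the phase space (the functional graph $s\mapsto\phi(s)$). *)

theory Defs
  imports Main
begin

text \<open>Vertices are the elements of a finite type 'a;
the graph is a symmetric irreflexive relation E. An extended system state assigns to
each vertex v a pair (x_v, k_v) :: bool \<times> nat (x_v = True means state 1).\<close>

datatype mode = Increasing | Decreasing | Mixed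

definition nbhd :: "('a \<Rightarrow> 'a \<Rightarrow> bool) \<Rightarrow> 'a \<Rightarrow> 'a set" where
  "nbhd E v = {u. u = v \<or> E v u}"

definition deg :: "('a \<Rightarrow> 'a \<Rightarrow> bool) \<Rightarrow> 'a \<Rightarrow> nat" where
  "deg E v = card {u. E v u}"

definition sigma :: "('a \<Rightarrow> 'a \<Rightarrow> bool) \<Rightarrow> ('a \<Rightarrow> bool) \<Rightarrow> 'a \<Rightarrow> nat" where
  "sigma E x v = card {u \<in> nbhd E v. x u}"

definition state_space :: "('a \<Rightarrow> 'a \<Rightarrow> bool) \<Rightarrow> ('a \<Rightarrow> bool \<times> nat) set" where
  "state_space E = {s. \<forall>v. 1 \<le> snd (s v) \<and> snd (s v) \<le> deg E v + 1}"

definition vertex_fun :: "mode \<Rightarrow> ('a \<Rightarrow> 'a \<Rightarrow> bool) \<Rightarrow> ('a \<Rightarrow> bool \<times> nat) \<Rightarrow> 'a \<Rightarrow> bool \<times> nat" where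
  "vertex_fun md E s v =
    (let xv = fst (s v); kv = snd (s v); sg = sigma E (\<lambda>u. fst (s u)) v;
         inc = (\<not> xv \<and> kv \<le> sg); dec = (xv \<and> sg < kv);
         k' = (case md of
                 Increasing \<Rightarrow> (if inc then kv + 1 else kv)
               | Decreasing \<Rightarrow> (if dec then kv - 1 else kv)
               | Mixed \<Rightarrow> (if inc then kv + 1 else if dec then kv - 1 else kv))
     in (kv \<le> sg, k'))"

definition local_map :: "mode \<Rightarrow> ('a \<Rightarrow> 'a \<Rightarrow> bool) \<Rightarrow> 'a \<Rightarrow> ('a \<Rightarrow> bool \<times> nat) \<Rightarrow> ('a \<Rightarrow> bool \<times> nat)" where
  "local_map md E v s = s(v := vertex_fun md E s v)"

text \<open>SDS map F_pi = F_{pi_n} o ... o F_{pi_1}: fold applies the head of the list first.\<close>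
definition sds_map :: "mode \<Rightarrow> ('a \<Rightarrow> 'a \<Rightarrow> bool) \<Rightarrow> 'a list \<Rightarrow> ('a \<Rightarrow> bool \<times> nat) \<Rightarrow> ('a \<Rightarrow> bool \<times> nat)" where
  "sds_map md E \<pi> = fold (local_map md E) \<pi>"

definition gca_map :: "mode \<Rightarrow> ('a \<Rightarrow> 'a \<Rightarrow> bool) \<Rightarrow> ('a \<Rightarrow> bool \<times> nat) \<Rightarrow> ('a \<Rightarrow> bool \<times> nat)" where
  "gca_map md E s = (\<lambda>v. vertex_fun md E s v)"

definition periodic_orbit_len :: "('s \<Rightarrow> 's) \<Rightarrow> 's set \<Rightarrow> 's \<Rightarrow> nat \<Rightarrow> bool" where
  "periodic_orbit_len phi S s m \<longleftrightarrow>
     s \<in> S \<and> 1 \<le> m \<and> (phi ^^ m) s = s \<and> (\<forall>j. 0 < j \<and> j < m \<longrightarrow> (phi ^^ j) s \<noteq> s)"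

end

theory Submission
  imports Defs
begin

definition desc :: "('s \<Rightarrow> int) \<Rightarrow> ('s \<Rightarrow> 's) \<Rightarrow> bool" where
  "desc V g \<longleftrightarrow> (\<forall>s. V (g s) \<le> V s \<and> (V (g s) = V s \<longrightarrow> g s = s))"

lemma desc_fold: "(\<forall>v\<in>set xs. desc V (g v)) \<Longrightarrow> desc V (fold g xs)"
proof (induction xs)
  case Nil then show ?case by (simp add: desc_def)
next
  case (Cons v vs)
  then have d1: "desc V (g v)" and d2: "desc V (fold g vs)" by auto
  show ?case unfolding desc_def
  proof
    fix s
    have a: "V (g v s) \<le> V s" "V (g v s) = V s \<longrightarrow> g v s = s" using d1 unfolding desc_def by auto
    have b: "V (fold g vs (g v s)) \<le> V (g v s)"
      "V (fold g vs (g v s)) = V (g v s) \<longrightarrow> fold g vs (g v s) = g v s"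
      using d2 unfolding desc_def by blast+
    show "V (fold g (v # vs) s) \<le> V s \<and> (V (fold g (v # vs) s) = V s \<longrightarrow> fold g (v # vs) s = s)"
      using a b by auto
  qed
qed

lemma orbit_V:
  assumes mono: "\<forall>t. V (\<phi> t) \<le> (V t :: int)" and per: "(\<phi>^^m) s = s" and m: "1 \<le> m"
  shows "V (\<phi> s) = V s"
proof -
  have h: "V ((\<phi>^^(Suc n)) s) \<le> V (\<phi> s)" for n
  proof (induction n)
    case 0 then show ?case by simp
  next
    case (Suc n)
    have "V ((\<phi>^^(Suc (Suc n))) s) = V (\<phi> ((\<phi>^^(Suc n)) s))" by simp
    also have "\<dots> \<le> V ((\<phi>^^(Suc n)) s)" using mono by blast
    finally show ?case using Suc by simp
  qed
  obtain n where "m = Suc n" using m by (cases m) auto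
  then have "V s \<le> V (\<phi> s)" using h[of n] per by simp
  then show ?thesis using mono by (meson antisym)
qed

lemma sum_upd_diff:
  fixes f g :: "'a::finite \<Rightarrow> int"
  assumes "\<And>u. u \<noteq> v \<Longrightarrow> f u = g u"
  shows "sum f UNIV - sum g UNIV = f v - g v"
proof -
  have "sum f UNIV = f v + sum f (UNIV - {v})" by (simp add: sum.remove)
  moreover have "sum g UNIV = g v + sum g (UNIV - {v})" by (simp add: sum.remove)
  moreover have "sum f (UNIV - {v}) = sum g (UNIV - {v})" using assms by (intro sum.cong) auto
  ultimately show ?thesis by simp
qed

definition qf :: "mode \<Rightarrow> bool \<times> nat \<Rightarrow> int" where
  "qf md p = (case md of Increasing \<Rightarrow> -(2 * int (snd p) - (if fst p then 1 else 0))
                  | _ \<Rightarrow> 2 * int (snd p) - (if fst p then 1 else 0))"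

lemma qf_vertex:
  assumes "md \<noteq> Mixed"
  shows "qf md (vertex_fun md E s v) \<le> qf md (s v) \<and>
         (qf md (vertex_fun md E s v) = qf md (s v) \<longrightarrow> vertex_fun md E s v = s v)"
  using assms
  by (cases md; cases "s v"; auto simp: qf_def vertex_fun_def Let_def)

definition Vq :: "mode \<Rightarrow> ('a::finite \<Rightarrow> bool \<times> nat) \<Rightarrow> int" where
  "Vq md s = (\<Sum>v\<in>UNIV. qf md (s v))"

lemma desc_local_q:
  assumes "md \<noteq> Mixed"
  shows "desc (Vq md) (local_map md E v)"
  unfolding desc_def
proof
  fix s :: "'a::finite \<Rightarrow> bool \<times> nat"
  let ?s' = "local_map md E v s"
  have "Vq md ?s' - Vq md s = qf md (?s' v) - qf md (s v)"
    unfolding Vq_def by (rule sum_upd_diff) (simp add: local_map_def)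
  moreover have "?s' v = vertex_fun md E s v" by (simp add: local_map_def)
  ultimately show "Vq md ?s' \<le> Vq md s \<and> (Vq md ?s' = Vq md s \<longrightarrow> ?s' = s)"
    using qf_vertex[OF assms, of E s v] by (auto simp: local_map_def)
qed

lemma desc_gca_q:
  assumes "md \<noteq> Mixed"
  shows "desc (Vq md) (gca_map md E)"
  unfolding desc_def
proof
  fix s :: "'a::finite \<Rightarrow> bool \<times> nat"
  have le: "\<And>v. qf md (gca_map md E s v) \<le> qf md (s v)"
    unfolding gca_map_def using qf_vertex[OF assms, of E s] by (rule conjunct1)
  have le2: "Vq md (gca_map md E s) \<le> Vq md s" unfolding Vq_def by (rule sum_mono) (use le in auto)
  moreover have "gca_map md E s = s" if eq: "Vq md (gca_map md E s) = Vq md s"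
  proof -
    have "(\<Sum>v\<in>UNIV. qf md (s v) - qf md (gca_map md E s v)) = 0"
      using eq unfolding Vq_def by (simp add: sum_subtractf)
    then have "\<forall>v\<in>UNIV. qf md (s v) - qf md (gca_map md E s v) = 0"
      by (subst sum_nonneg_eq_0_iff[symmetric]) (use le in auto)
    then show ?thesis using qf_vertex[OF assms, of E s] by (auto simp: gca_map_def fun_eq_iff)
  qed
  ultimately show "Vq md (gca_map md E s) \<le> Vq md s \<and> (Vq md (gca_map md E s) = Vq md s \<longrightarrow> gca_map md E s = s)"
    by blast
qed

definition X :: "('a \<Rightarrow> bool \<times> nat) \<Rightarrow> 'a \<Rightarrow> int" where
  "X s u = (if fst (s u) then 1 else 0)"

definition Nf :: "('a \<Rightarrow> 'a \<Rightarrow> bool) \<Rightarrow> ('a::finite \<Rightarrow> int) \<Rightarrow> 'a \<Rightarrow> int" where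
  "Nf E x v = (\<Sum>w\<in>UNIV. if E v w then x w else 0)"

definition C :: "('a \<Rightarrow> bool \<times> nat) \<Rightarrow> 'a \<Rightarrow> int" where
  "C s v = int (snd (s v)) - X s v"

lemma sigma_eq:
  fixes E :: "'a::finite \<Rightarrow> 'a \<Rightarrow> bool"
  assumes irr: "irreflp E"
  shows "int (sigma E (\<lambda>u. fst (s u)) v) = Nf E (X s) v + X s v"
proof -
  have "sigma E (\<lambda>u. fst (s u)) v = card {u\<in>UNIV. (u = v \<or> E v u) \<and> fst (s u)}"
    by (simp add: sigma_def nbhd_def)
  also have "\<dots> = (\<Sum>u\<in>UNIV. if (u = v \<or> E v u) \<and> fst (s u) then 1 else 0)"
    by (simp add: sum.inter_filter[symmetric])
  finally have "int (sigma E (\<lambda>u. fst (s u)) v) = (\<Sum>u\<in>UNIV. if (u = v \<or> E v u) \<and> fst (s u) then 1 else 0)"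
    by (simp add: of_nat_sum if_distrib cong: if_cong)
  also have "\<dots> = (\<Sum>u\<in>UNIV. (if E v u then X s u else 0) + (if u = v then X s u else 0))"
    using irr by (intro sum.cong) (auto simp: X_def irreflp_def)
  also have "\<dots> = Nf E (X s) v + X s v"
    by (simp add: sum.distrib Nf_def)
  finally show ?thesis .
qed

lemma mixed_vf:
  fixes E :: "'a::finite \<Rightarrow> 'a \<Rightarrow> bool"
  assumes irr: "irreflp E"
  shows "fst (vertex_fun Mixed E s v) = (C s v \<le> Nf E (X s) v) \<and>
    int (snd (vertex_fun Mixed E s v)) = C s v + (if fst (vertex_fun Mixed E s v) then 1 else 0)"
  using sigma_eq[OF irr, of s v]
  by (cases "s v") (auto simp: vertex_fun_def Let_def C_def X_def)


definition Wf :: "('a \<Rightarrow> 'a \<Rightarrow> bool) \<Rightarrow> ('a::finite \<Rightarrow> int) \<Rightarrow> int" where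
  "Wf E x = (\<Sum>u\<in>UNIV. \<Sum>w\<in>UNIV. if E u w then x u * x w else 0)"

lemma W_upd:
  fixes E :: "'a::finite \<Rightarrow> 'a \<Rightarrow> bool"
  assumes sym: "symp E" and irr: "irreflp E" and yx: "\<And>u. u \<noteq> v \<Longrightarrow> y u = x u"
  shows "Wf E y - Wf E x = 2 * (y v - x v) * Nf E x v"
proof -
  define D where "D = y v - x v"
  have "Wf E y - Wf E x = (\<Sum>u\<in>UNIV. \<Sum>w\<in>UNIV. if E u w then y u * y w - x u * x w else 0)"
    unfolding Wf_def by (simp add: sum_subtractf[symmetric]) (intro sum.cong refl; simp)
  also have "\<dots> = (\<Sum>u\<in>UNIV. \<Sum>w\<in>UNIV. (if u = v \<and> E v w then D * x w else 0)
                       + (if w = v \<and> E u v then x u * D else 0))"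
  proof (intro sum.cong refl)
    fix u w
    show "(if E u w then y u * y w - x u * x w else 0) =
          (if u = v \<and> E v w then D * x w else 0) + (if w = v \<and> E u v then x u * D else 0)"
      using irr yx unfolding D_def irreflp_def
      by (cases "u = v"; cases "w = v") (auto simp: algebra_simps)
  qed
  also have "\<dots> = (\<Sum>w\<in>UNIV. if E v w then D * x w else 0) + (\<Sum>u\<in>UNIV. if E u v then x u * D else 0)"
  proof -
    have a: "(\<Sum>w\<in>UNIV. if u = v \<and> E v w then D * x w else 0) =
             (if u = v then (\<Sum>w\<in>UNIV. if E v w then D * x w else 0) else 0)" for u
      by simp
    have b: "(\<Sum>w\<in>UNIV. if w = v \<and> E u v then x u * D else 0) =
             (if E u v then x u * D else 0)" for u
    proof -
      have "(\<Sum>w\<in>UNIV. if w = v \<and> E u v then x u * D else 0) =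
            (\<Sum>w\<in>UNIV. if w = v then (if E u v then x u * D else 0) else 0)"
        by (intro sum.cong) auto
      also have "\<dots> = (if E u v then x u * D else 0)" by simp
      finally show ?thesis .
    qed
    show ?thesis by (simp only: sum.distrib a b) simp
  qed
  also have "(\<Sum>u\<in>UNIV. if E u v then x u * D else 0) = D * Nf E x v"
    unfolding Nf_def sum_distrib_left
    using sym by (intro sum.cong) (auto simp: symp_def)
  also have "(\<Sum>w\<in>UNIV. if E v w then D * x w else 0) = D * Nf E x v"
    unfolding Nf_def sum_distrib_left by (intro sum.cong) auto
  finally show ?thesis by (simp add: D_def)
qed


definition Vm :: "('a \<Rightarrow> 'a \<Rightarrow> bool) \<Rightarrow> ('a::finite \<Rightarrow> bool \<times> nat) \<Rightarrow> int" where
  "Vm E s = - Wf E (X s) + (\<Sum>u\<in>UNIV. (2 * C s u - 1) * X s u)"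

lemma desc_local_m:
  fixes E :: "'a::finite \<Rightarrow> 'a \<Rightarrow> bool"
  assumes sym: "symp E" and irr: "irreflp E"
  shows "desc (Vm E) (local_map Mixed E v)"
  unfolding desc_def
proof
  fix s :: "'a \<Rightarrow> bool \<times> nat"
  define s' where "s' = local_map Mixed E v s"
  have s'v: "s' v = vertex_fun Mixed E s v" by (simp add: s'_def local_map_def)
  have off: "u \<noteq> v \<Longrightarrow> s' u = s u" for u by (simp add: s'_def local_map_def)
  define a where "a = X s' v"
  define x where "x = X s v"
  define c where "c = C s v"
  define N where "N = Nf E (X s) v"
  have mv: "fst (s' v) = (c \<le> N)" "int (snd (s' v)) = c + (if fst (s' v) then 1 else 0)"
    using mixed_vf[OF irr, of s v] unfolding s'v c_def N_def by auto
  have Cv: "C s' v = c" using mv by (simp add: C_def X_def)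
  have a_eq: "a = (if c \<le> N then 1 else 0)" using mv by (simp add: a_def X_def)
  have x01: "x = 0 \<or> x = 1" by (simp add: x_def X_def)
  have W: "Wf E (X s') - Wf E (X s) = 2 * (a - x) * N"
    unfolding a_def x_def N_def by (rule W_upd[OF sym irr]) (simp add: X_def off)
  have L: "(\<Sum>u\<in>UNIV. (2 * C s' u - 1) * X s' u) - (\<Sum>u\<in>UNIV. (2 * C s u - 1) * X s u)
           = (2 * c - 1) * a - (2 * c - 1) * x"
  proof (subst sum_upd_diff[of v])
    show "(2 * C s' u - 1) * X s' u = (2 * C s u - 1) * X s u" if "u \<noteq> v" for u
      using off[OF that] by (simp add: C_def X_def)
    show "(2 * C s' v - 1) * X s' v - (2 * C s v - 1) * X s v = (2 * c - 1) * a - (2 * c - 1) * x"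
      by (simp only: Cv flip: a_def x_def c_def)
  qed
  have diff: "Vm E s' - Vm E s = - (a - x) * (2 * N - 2 * c + 1)"
    using W L unfolding Vm_def by (simp add: algebra_simps)
  have le: "Vm E s' \<le> Vm E s"
  proof (cases "c \<le> N")
    case True
    then have "a = 1" using a_eq by simp
    then show ?thesis using diff x01 True by auto
  next
    case False
    then have "a = 0" using a_eq by simp
    then show ?thesis using diff x01 False by auto
  qed
  moreover have "s' = s" if eq: "Vm E s' = Vm E s"
  proof -
    have "(a - x) * (2 * N - 2 * c + 1) = 0" using eq diff by (simp add: algebra_simps)
    moreover have "2 * N - 2 * c + 1 \<noteq> 0" by presburger
    ultimately have ax: "a = x" by auto
    have f: "fst (s' v) = fst (s v)" using ax unfolding a_def x_def X_def by (auto split: if_splits)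
    have "int (snd (s' v)) = c + a" using mv(2) by (simp add: a_def X_def)
    also have "\<dots> = int (snd (s v))" using ax by (simp add: c_def C_def x_def)
    finally have "int (snd (s' v)) = int (snd (s v))" .
    then have sv: "s' v = s v" using f by (simp add: prod_eq_iff)
    show ?thesis
    proof (rule ext)
      fix u show "s' u = s u" using sv off by (cases "u = v") auto
    qed
  qed
  ultimately show "Vm E (local_map Mixed E v s) \<le> Vm E s \<and>
     (Vm E (local_map Mixed E v s) = Vm E s \<longrightarrow> local_map Mixed E v s = s)"
    unfolding s'_def by blast
qed


definition Bf :: "('a \<Rightarrow> 'a \<Rightarrow> bool) \<Rightarrow> ('a::finite \<Rightarrow> int) \<Rightarrow> ('a \<Rightarrow> int) \<Rightarrow> int" where
  "Bf E y x = (\<Sum>u\<in>UNIV. \<Sum>w\<in>UNIV. if E u w then y u * x w else 0)"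

lemma Bf1: "Bf E y x = (\<Sum>u\<in>UNIV. y u * Nf E x u)"
  unfolding Bf_def Nf_def sum_distrib_left by (intro sum.cong) auto

lemma Bf2:
  assumes sym: "symp E"
  shows "Bf E y x = (\<Sum>w\<in>UNIV. x w * Nf E y w)"
proof -
  have "Bf E y x = (\<Sum>w\<in>UNIV. \<Sum>u\<in>UNIV. if E u w then y u * x w else 0)"
    unfolding Bf_def by (rule sum.swap)
  also have "\<dots> = (\<Sum>w\<in>UNIV. x w * Nf E y w)"
    unfolding Nf_def sum_distrib_left using sym
    by (intro sum.cong refl) (auto simp: symp_def mult.commute)
  finally show ?thesis .
qed

definition Phi :: "('a \<Rightarrow> 'a \<Rightarrow> bool) \<Rightarrow> ('a::finite \<Rightarrow> bool \<times> nat) \<Rightarrow> int" where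
  "Phi E s = -2 * Bf E (X (gca_map Mixed E s)) (X s)
     + (\<Sum>v\<in>UNIV. (2 * C s v - 1) * (X (gca_map Mixed E s) v + X s v))"

lemma gca_m:
  fixes E :: "'a::finite \<Rightarrow> 'a \<Rightarrow> bool"
  assumes irr: "irreflp E"
  shows "C (gca_map Mixed E s) v = C s v"
    "X (gca_map Mixed E s) v = (if C s v \<le> Nf E (X s) v then 1 else 0)"
  using mixed_vf[OF irr, of s v] by (auto simp: gca_map_def C_def X_def)

lemma Phi_gca:
  fixes E :: "'a::finite \<Rightarrow> 'a \<Rightarrow> bool"
  assumes sym: "symp E" and irr: "irreflp E"
  shows "Phi E (gca_map Mixed E s) \<le> Phi E s \<and>
    (Phi E (gca_map Mixed E s) = Phi E s \<longrightarrow> gca_map Mixed E (gca_map Mixed E s) = s)"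
proof -
  define F where "F = gca_map Mixed E"
  define x where "x = X s"
  define y where "y = X (F s)"
  define z where "z = X (F (F s))"
  define c where "c = C s"
  define N where "N = Nf E y"
  have Cf: "C (F s) = c" using gca_m(1)[OF irr] unfolding F_def c_def by auto
  have zv: "z v = (if c v \<le> N v then 1 else 0)" for v
    using gca_m(2)[OF irr, of "F s" v] Cf unfolding z_def N_def y_def F_def by simp
  have x01: "x v = 0 \<or> x v = 1" for v by (simp add: x_def X_def)
  have h1: "Phi E (F s) = (\<Sum>v\<in>UNIV. -2 * (z v * N v) + (2 * c v - 1) * (z v + y v))"
    unfolding Phi_def Bf1 F_def[symmetric] Cf
    by (simp add: sum.distrib sum_distrib_left sum_subtractf sum_negf z_def y_def N_def)
  have h2: "Phi E s = (\<Sum>v\<in>UNIV. -2 * (x v * N v) + (2 * c v - 1) * (y v + x v))"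
    unfolding Phi_def Bf2[OF sym] F_def[symmetric]
    by (simp add: sum.distrib sum_distrib_left sum_subtractf sum_negf x_def y_def N_def c_def)
  define t where "t v = - (z v - x v) * (2 * N v - 2 * c v + 1)" for v
  have d: "Phi E (F s) - Phi E s = (\<Sum>v\<in>UNIV. t v)"
    unfolding h1 h2 sum_subtractf[symmetric] t_def by (intro sum.cong refl) (simp add: algebra_simps)
  have tle: "t v \<le> 0" for v
  proof (cases "c v \<le> N v")
    case True then show ?thesis using x01[of v] zv[of v] by (auto simp: t_def)
  next
    case False then show ?thesis using x01[of v] zv[of v] by (auto simp: t_def)
  qed
  have le: "Phi E (F s) \<le> Phi E s" using d sum_nonpos[of UNIV t] tle by simp
  moreover have "F (F s) = s" if eq: "Phi E (F s) = Phi E s"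
  proof (rule ext)
    fix v
    have "(\<Sum>v\<in>UNIV. - t v) = 0" using d eq by (simp add: sum_negf)
    then have "- t v = 0" using tle by (subst (asm) sum_nonneg_eq_0_iff) auto
    moreover have "2 * N v - 2 * c v + 1 \<noteq> 0" by presburger
    ultimately have zx: "z v = x v" by (auto simp: t_def)
    then have f: "fst (F (F s) v) = fst (s v)" unfolding z_def x_def X_def by (auto split: if_splits)
    have "C (F (F s)) v = c v" using gca_m(1)[OF irr, of "F s" v] Cf unfolding F_def by simp
    then have "int (snd (F (F s) v)) = int (snd (s v))"
      using zx unfolding C_def c_def z_def x_def by simp
    then show "F (F s) v = s v" using f by (simp add: prod_eq_iff)
  qed
  ultimately show ?thesis unfolding F_def by blast
qed


lemma per_desc:
  assumes d: "desc V \<phi>" and p: "periodic_orbit_len \<phi> S s m"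
  shows "m = 1"
proof -
  have m: "1 \<le> m" "(\<phi>^^m) s = s" "\<forall>j. 0 < j \<and> j < m \<longrightarrow> (\<phi>^^j) s \<noteq> s"
    using p unfolding periodic_orbit_len_def by auto
  have "V (\<phi> s) = V s" by (rule orbit_V[OF _ m(2) m(1)]) (use d in \<open>auto simp: desc_def\<close>)
  then have "\<phi> s = s" using d by (auto simp: desc_def)
  then show ?thesis using m(1) m(3)[rule_format, of 1] by fastforce
qed

lemma per_desc2:
  assumes d: "\<forall>t. V (\<phi> t) \<le> (V t :: int) \<and> (V (\<phi> t) = V t \<longrightarrow> \<phi> (\<phi> t) = t)"
    and p: "periodic_orbit_len \<phi> S s m"
  shows "m \<le> 2"
proof -
  have m: "1 \<le> m" "(\<phi>^^m) s = s" "\<forall>j. 0 < j \<and> j < m \<longrightarrow> (\<phi>^^j) s \<noteq> s"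
    using p unfolding periodic_orbit_len_def by auto
  have "V (\<phi> s) = V s" by (rule orbit_V[OF _ m(2) m(1)]) (use d in auto)
  then have "\<phi> (\<phi> s) = s" using d by auto
  then have "(\<phi>^^2) s = s" by (simp add: numeral_2_eq_2)
  then show ?thesis using m(3)[rule_format, of 2] by fastforce
qed

theorem theorem3p1:
  fixes E :: "'a::finite \<Rightarrow> 'a \<Rightarrow> bool" and \<pi> :: "'a list" and md :: mode
  assumes "symp E" and "irreflp E"
    and "distinct \<pi>" and "set \<pi> = UNIV"
  shows "(\<forall>s m. periodic_orbit_len (sds_map md E \<pi>) (state_space E) s m \<longrightarrow> m = 1)
       \<and> (\<forall>s m. periodic_orbit_len (gca_map md E) (state_space E) s m \<longrightarrow> m \<le> 2)"
proof (cases "md = Mixed")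
  case True
  have d1: "desc (Vm E) (sds_map md E \<pi>)"
    unfolding sds_map_def True by (rule desc_fold) (use desc_local_m[OF assms(1,2)] in blast)
  have d2: "\<forall>t. Phi E (gca_map md E t) \<le> Phi E t \<and>
      (Phi E (gca_map md E t) = Phi E t \<longrightarrow> gca_map md E (gca_map md E t) = t)"
    unfolding True using Phi_gca[OF assms(1,2)] by blast
  show ?thesis using per_desc[OF d1] per_desc2[OF d2] by blast
next
  case False
  have d1: "desc (Vq md) (sds_map md E \<pi>)"
    unfolding sds_map_def by (rule desc_fold) (use desc_local_q[OF False] in blast)
  have dg: "desc (Vq md) (gca_map md E)" by (rule desc_gca_q[OF False])
  have d2: "\<forall>t. Vq md (gca_map md E t) \<le> Vq md t \<and>
      (Vq md (gca_map md E t) = Vq md t \<longrightarrow> gca_map md E (gca_map md E t) = t)"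
    using dg unfolding desc_def by metis
  show ?thesis using per_desc[OF d1] per_desc2[OF d2] by blast
qed

end
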